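(* Let $q$ be an odd prime power, $d\ge 2$ an even integer, and $A\subset\mathbb F_q^d$. Let $\mathcal{SQ}(A)$ and $\mathcal{ZR}(A)$ be the number of pairs $(x,y)\in A\times A$ with $\eta(\|x-y\|)=1$ and with $\eta(\|x-y\|)=0$, respectively. Let $\Omega^+(A)=\sum_{m:\ \eta(\|m\|)=1}|\widehat A(m)|^2$ and $\Omega^-(A)=\sum_{m:\ \eta(\|m\|)=-1}|\widehat A(m)|^2$ (sums over $m\in\mathbb F_q^d$). Then \begin{enumerate} \item $$\mathcal{SQ}(A)+\frac{\mathcal{ZR}(A)}{2}=\frac{|A|^2}{2}+\frac{q^{d-1}G_1^{d+2}}{2}\Omega^+(A)-\frac{q^{d-1}G_1^{d+2}}{2}\Omega^-(A).$$ \item In particular, if $d\equiv 2\pmod 4$, then $$\mathcal{SQ}(A)+\frac{\mathcal{ZR}(A)}{2}=\frac{|A|^2}{2}+\frac{q^{\frac{3d}{2}}}{2}\Omega^+(A)-\frac{q^{\frac{3d}{2}}}{2}\Omega^-(A).$$ \end{enumerate}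
   Context: For $x\in\mathbb F_q^d$, $\|x\|=x_1^2+\cdots+x_d^2$. $\eta$ is the quadratic character of $\mathbb F_q$ with $\eta(0)=0$. $\chi$ is the canonical nontrivial additive character of $\mathbb F_q$; $G_1=\sum_{s\in\mathbb F_q^*}\eta(s)\chi(s)$ is the Gauss sum. For $A\subset\mathbb F_q^d$, $\widehat{A}(m)=q^{-d}\sum_{x\in A}\chi(-m\cdot x)$ is the Fourier transform of the indicator function of $A$. *)

theory Defs
  imports "HOL-Analysis.Analysis"
begin

text \<open>Finite field F_q modelled by a type 'a of class field and finite; q = CARD('a),
  p = CHAR('a), q = p^r.\<close>

definition fdeg :: "'a::{field,finite} itself \<Rightarrow> nat" where
  "fdeg T = (THE r. CHAR('a) ^ r = CARD('a))"

definition ftrace :: "'a::{field,finite} \<Rightarrow> 'a" where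
  "ftrace x = (\<Sum>i<fdeg TYPE('a). x ^ (CHAR('a) ^ i))"

definition addchar :: "'a::{field,finite} \<Rightarrow> complex" where
  "addchar x = (let k = (THE k::nat. k < CHAR('a) \<and> of_nat k = ftrace x)
                in cis (2 * pi * real k / real CHAR('a)))"

definition qchar :: "'a::{field,finite} \<Rightarrow> int" where
  "qchar x = (if x = 0 then 0 else if (\<exists>y. y ^ 2 = x) then 1 else -1)"

definition gauss1 :: "'a::{field,finite} itself \<Rightarrow> complex" where
  "gauss1 T = (\<Sum>s\<in>UNIV - {0::'a}. of_int (qchar s) * addchar s)"

definition fnorm :: "'a::{field,finite} ^ 'n \<Rightarrow> 'a" where
  "fnorm x = (\<Sum>i\<in>UNIV. (x $ i) ^ 2)"

definition fdot :: "'a::{field,finite} ^ 'n \<Rightarrow> 'a ^ 'n \<Rightarrow> 'a" where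
  "fdot m x = (\<Sum>i\<in>UNIV. m $ i * x $ i)"

definition fourier :: "('a::{field,finite} ^ 'n) set \<Rightarrow> 'a ^ 'n \<Rightarrow> complex" where
  "fourier A m = (\<Sum>x\<in>A. addchar (- fdot m x)) / of_nat CARD('a) ^ CARD('n)"

definition SQ :: "('a::{field,finite} ^ 'n) set \<Rightarrow> nat" where
  "SQ A = card {(x, y). x \<in> A \<and> y \<in> A \<and> qchar (fnorm (x - y)) = 1}"

definition ZR :: "('a::{field,finite} ^ 'n) set \<Rightarrow> nat" where
  "ZR A = card {(x, y). x \<in> A \<and> y \<in> A \<and> qchar (fnorm (x - y)) = 0}"

definition OmegaP :: "('a::{field,finite} ^ 'n) set \<Rightarrow> real" where
  "OmegaP A = (\<Sum>m | qchar (fnorm m) = 1. (cmod (fourier A m))\<^sup>2)"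

definition OmegaM :: "('a::{field,finite} ^ 'n) set \<Rightarrow> real" where
  "OmegaM A = (\<Sum>m | qchar (fnorm m) = -1. (cmod (fourier A m))\<^sup>2)"

end

theory Submission
  imports Defs "HOL-Computational_Algebra.Polynomial" "HOL-Computational_Algebra.Primes"
begin


lemma char_prime: "prime CHAR('a::{field,finite})"
  by (rule prime_CHAR_semidom) (rule finite_imp_CHAR_pos, simp)

lemma char_gt1: "CHAR('a::{field,finite}) > 1"
  using char_prime[where 'a='a] prime_gt_1_nat by blast

lemma ff_power_card: "(x::'a::{field,finite}) ^ CARD('a) = x"
proof (cases "x = 0")
  case False
  have "x * (\<Prod>y\<in>UNIV-{0}. x * y) = x * x ^ (card (UNIV :: 'a set) - 1) * \<Prod>(UNIV-{0})"
    by (simp add: prod.distrib mult_ac)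
  also have "x * x ^ (card (UNIV :: 'a set) - 1) = x ^ Suc (card (UNIV :: 'a set) - 1)"
    by (subst power_Suc) auto
  also have "Suc (card (UNIV :: 'a set) - 1) = card (UNIV :: 'a set)"
    using finite_UNIV_card_ge_0[where ?'a = 'a] by simp
  also have "(\<Prod>y\<in>UNIV-{0}. x * y) = (\<Prod>y\<in>UNIV-{0}. y)"
    by (rule prod.reindex_bij_witness[of _ "\<lambda>y. y / x" "\<lambda>y. x * y"]) (use False in auto)
  finally show ?thesis
    by simp
qed (use finite_UNIV_card_ge_0[where ?'a = 'a] in auto)

lemma ofnat_mult_closed:
  assumes "0 \<in> S" "\<forall>x\<in>S. \<forall>y\<in>S. x + y \<in> S" "s \<in> S"
  shows "of_nat n * s \<in> S"
  using assms by (induction n) (auto simp: distrib_right)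

lemma card_char_power_aux:
  fixes S :: "'a::{field,finite} set"
  assumes "0 \<in> S" "\<forall>x\<in>S. \<forall>y\<in>S. x + y \<in> S" "card S = CHAR('a) ^ k"
  shows "\<exists>r. CHAR('a) ^ r = CARD('a)"
  using assms
proof (induction "CARD('a) - card S" arbitrary: S k rule: less_induct)
  case less
  show ?case
  proof (cases "S = UNIV")
    case True then show ?thesis using less by auto
  next
    case False
    then obtain a where a: "a \<notin> S" by auto
    define p where "p = CHAR('a)"
    have p1: "p > 1" using char_gt1 p_def by auto
    have pp: "prime p" using char_prime p_def by auto
    have ofp: "of_nat p = (0::'a)" using p_def by simp
    have neg: "- s \<in> S" if "s \<in> S" for s
    proof -
      have "of_nat (p - 1) * s + s = of_nat p * s"
        using p1 by (simp add: of_nat_diff algebra_simps)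
      hence "of_nat (p - 1) * s = - s" using ofp by (simp add: add_eq_0_iff2)
      thus ?thesis using ofnat_mult_closed[OF less.prems(1,2) that, of "p - 1"] by simp
    qed
    have key: False if "s \<in> S" "s' \<in> S" "j' < j" "j < p"
       "s + of_nat j * a = s' + of_nat j' * a" for s s' j j'
    proof -
      define c where "c = j - j'"
      have c: "0 < c" "c < p" using that c_def by auto
      have "of_nat c * a = s' + (- s)"
        using that(3,5) unfolding c_def by (simp add: of_nat_diff algebra_simps)
      hence cS: "of_nat c * a \<in> S" using less.prems(2) that(1,2) neg[of s] by (metis diff_conv_add_uminus)
      have "coprime c p"
        using c pp by (metis coprime_commute nat_dvd_not_less prime_imp_coprime_nat)
      then obtain x y where xy: "c * x = p * y + 1"
        using bezout_nat[of c p] c by (auto simp: coprime_iff_gcd_eq_1)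
      have "of_nat x * (of_nat c * a) = of_nat (c * x) * a" by (simp add: mult_ac)
      also have "\<dots> = a" using xy ofp by simp
      finally have eqa: "of_nat x * (of_nat c * a) = a" .
      have "a \<in> S" using ofnat_mult_closed[OF less.prems(1,2) cS, of x] eqa by metis
      thus False using a by simp
    qed
    define f where "f = (\<lambda>(s, j). s + of_nat j * (a::'a))"
    define S' where "S' = f ` (S \<times> {..<p})"
    have inj: "inj_on f (S \<times> {..<p})"
    proof (rule inj_onI)
      fix u v assume hu: "u \<in> S \<times> {..<p}" "v \<in> S \<times> {..<p}" "f u = f v"
      obtain s j s' j' where uv: "u = (s, j)" "v = (s', j')" by (cases u, cases v) auto
      have h: "s \<in> S" "j < p" "s' \<in> S" "j' < p" "s + of_nat j * a = s' + of_nat j' * a"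
        using hu uv by (auto simp: f_def)
      have "j = j'"
      proof (rule ccontr)
        assume "j \<noteq> j'"
        then consider "j' < j" | "j < j'" by linarith
        thus False
        proof cases
          case 1 thus False using key[of s s' j' j] h by auto
        next
          case 2 thus False using key[of s' s j j'] h by auto
        qed
      qed
      thus "u = v" using h uv by simp
    qed
    have cardS': "card S' = CHAR('a) ^ Suc k"
      unfolding S'_def using inj less.prems(3)
      by (simp add: card_image card_cartesian_product p_def)
    have S'0: "0 \<in> S'" unfolding S'_def using less.prems(1) p1
      by (auto simp: f_def image_iff intro!: bexI[of _ "0"] bexI[of _ "0::nat"])
    have S'add: "\<forall>x\<in>S'. \<forall>y\<in>S'. x + y \<in> S'"
    proof (intro ballI)
      fix x y assume "x \<in> S'" "y \<in> S'"
      then obtain s j s' j' where h: "s \<in> S" "j < p" "s' \<in> S" "j' < p"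
        "x = s + of_nat j * a" "y = s' + of_nat j' * a"
        unfolding S'_def f_def by auto
      have e: "of_nat (j + j') = (of_nat ((j + j') mod p) :: 'a)"
      proof -
        have "of_nat (j + j') = (of_nat ((j + j') mod p + p * ((j + j') div p)) :: 'a)"
          by simp
        also have "\<dots> = of_nat ((j + j') mod p)" by (metis ofp of_nat_add of_nat_mult mult_zero_left add_0_right)
        finally show ?thesis .
      qed
      have "x + y = (s + s') + of_nat (j + j') * a" using h by (simp add: algebra_simps)
      also have "\<dots> = f (s + s', (j + j') mod p)" using e by (simp add: f_def)
      finally show "x + y \<in> S'" unfolding S'_def
        using h less.prems(2) p1 by (auto intro!: imageI)
    qed
    have "S \<subseteq> S'" unfolding S'_def f_def
    proof
      fix s assume "s \<in> S"
      thus "s \<in> (\<lambda>(s, j). s + of_nat j * a) ` (S \<times> {..<p})"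
        using p1 by (auto simp: image_iff intro!: bexI[of _ "s"] bexI[of _ "0::nat"])
    qed
    moreover have "a \<in> S'" unfolding S'_def f_def using p1 less.prems(1)
      by (auto simp: image_iff intro!: bexI[of _ "0"] bexI[of _ "1::nat"])
    ultimately have "card S < card S'"
      using a by (intro psubset_card_mono) auto
    moreover have "card S' \<le> CARD('a)" by (rule card_mono) auto
    ultimately have "CARD('a) - card S' < CARD('a) - card S" by linarith
    from less.hyps[OF this S'0 S'add cardS'] show ?thesis .
  qed
qed

lemma card_char_power: "\<exists>r. CHAR('a::{field,finite}) ^ r = CARD('a)"
  by (rule card_char_power_aux[of "{0::'a}" 0]) auto

lemma fdeg: "CHAR('a::{field,finite}) ^ fdeg TYPE('a) = CARD('a)"
proof -
  obtain r where r: "CHAR('a) ^ r = CARD('a)" using card_char_power by blast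
  have "\<exists>!r. CHAR('a) ^ r = CARD('a)"
    using r char_gt1[where 'a='a] by (metis power_inject_exp)
  thus ?thesis unfolding fdeg_def by (rule theI')
qed

lemma fdeg_pos: "fdeg TYPE('a::{field,finite}) > 0"
proof (rule ccontr)
  assume "\<not> ?thesis"
  hence "CARD('a) = 1" using fdeg[where 'a='a] by simp
  moreover have "CARD('a) \<ge> 2"
  proof -
    have "card {0::'a, 1} \<le> CARD('a)" by (rule card_mono) auto
    thus ?thesis by simp
  qed
  ultimately show False by simp
qed


lemma ftrace_add: "ftrace (x + y :: 'a::{field,finite}) = ftrace x + ftrace y"
  unfolding ftrace_def
  by (simp add: sum.distrib freshmans_dream'[OF char_prime refl])

lemma ftrace_zero: "ftrace (0::'a::{field,finite}) = 0"
  using char_gt1[where 'a='a] by (simp add: ftrace_def power_0_left)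

lemma ftrace_minus: "ftrace (- x :: 'a::{field,finite}) = - ftrace x"
proof -
  have "ftrace (-x) + ftrace x = 0" using ftrace_add[of "-x" x] ftrace_zero by (metis add.left_inverse)
  thus ?thesis by (simp add: eq_neg_iff_add_eq_0)
qed

lemma ftrace_pow: "ftrace (x :: 'a::{field,finite}) ^ CHAR('a) = ftrace x"
proof -
  define r where "r = fdeg TYPE('a)"
  define p where "p = CHAR('a)"
  define g where "g = (\<lambda>i. x ^ (p ^ i))"
  have "ftrace x ^ p = (\<Sum>i<r. g i ^ p)"
    unfolding ftrace_def r_def[symmetric] p_def g_def
    by (rule freshmans_dream_sum[OF char_prime refl])
  also have "\<dots> = (\<Sum>i<r. g (Suc i))"
    by (simp add: g_def power_mult[symmetric] mult.commute)
  also have "\<dots> = (\<Sum>i<r. g i)"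
  proof -
    have "(\<Sum>i<Suc r. g i) = g 0 + (\<Sum>i<r. g (Suc i))" by (rule sum.lessThan_Suc_shift)
    moreover have "(\<Sum>i<Suc r. g i) = (\<Sum>i<r. g i) + g r" by simp
    moreover have "g r = g 0" unfolding g_def r_def p_def by (simp add: fdeg ff_power_card)
    ultimately show ?thesis by (simp add: add.commute)
  qed
  finally show ?thesis unfolding ftrace_def r_def p_def g_def .
qed

lemma of_nat_inj_char:
  assumes "m < CHAR('a::{field,finite})" "n < CHAR('a)" "(of_nat m :: 'a) = of_nat n"
  shows "m = n"
proof (rule ccontr)
  assume "m \<noteq> n"
  then consider "m < n" | "n < m" by linarith
  thus False
  proof cases
    case 1
    hence "CHAR('a) dvd (n - m)" using assms of_nat_eq_iff_char_dvd[of m n] by auto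
    thus False using 1 assms dvd_imp_le[of "CHAR('a)" "n - m"] by linarith
  next
    case 2
    hence "CHAR('a) dvd (m - n)" using assms of_nat_eq_iff_char_dvd[of n m] by auto
    thus False using 2 assms dvd_imp_le[of "CHAR('a)" "m - n"] by linarith
  qed
qed

lemma of_nat_fermat: "(of_nat k :: 'a::{field,finite}) ^ CHAR('a) = of_nat k"
proof (induction k)
  case 0 then show ?case using char_gt1[where 'a='a] by simp
next
  case (Suc k)
  have "(of_nat (Suc k) :: 'a) ^ CHAR('a) = (of_nat k + 1) ^ CHAR('a)" by (simp add: add.commute)
  also have "\<dots> = of_nat k ^ CHAR('a) + 1 ^ CHAR('a)"
    by (rule freshmans_dream[OF char_prime refl])
  finally show ?case using Suc by simp
qed

lemma prime_field_elem:
  assumes "(y :: 'a::{field,finite}) ^ CHAR('a) = y"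
  shows "\<exists>k<CHAR('a). of_nat k = y"
proof (rule ccontr)
  assume na: "\<not> ?thesis"
  define p where "p = CHAR('a)"
  have p1: "p > 1" using char_gt1 p_def by auto
  define P where "P = monom (1::'a) p - [:0, 1:]"
  have degP: "degree P \<le> p"
    unfolding P_def using p1 by (intro degree_diff_le) (auto simp: degree_monom_le)
  have "coeff P p = 1" unfolding P_def using p1 by (cases p) (auto simp: coeff_pCons split: nat.split)
  hence P0: "P \<noteq> 0" by auto
  have roots: "insert y (of_nat ` {..<p}) \<subseteq> {x. poly P x = 0}"
    using assms of_nat_fermat[where 'a='a] unfolding P_def p_def by (auto simp: poly_monom)
  have inj: "inj_on (of_nat :: nat \<Rightarrow> 'a) {..<p}"
    by (rule inj_onI) (use of_nat_inj_char p_def in auto)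
  have "y \<notin> of_nat ` {..<p}" using na p_def by auto
  hence "card (insert y (of_nat ` {..<p})) = Suc p"
    using inj by (simp add: card_image)
  moreover have "card (insert y (of_nat ` {..<p})) \<le> card {x. poly P x = 0}"
    by (rule card_mono[OF _ roots]) simp
  moreover have "card {x. poly P x = 0} \<le> p"
    using card_poly_roots_bound[OF P0] degP by simp
  ultimately show False by simp
qed

lemma ftrace_nonzero: "\<exists>x::'a::{field,finite}. ftrace x \<noteq> 0"
proof (rule ccontr)
  assume "\<not> ?thesis"
  hence all0: "\<And>x::'a. ftrace x = 0" by auto
  define p where "p = CHAR('a)"
  define r where "r = fdeg TYPE('a)"
  have p1: "p > 1" using char_gt1 p_def by auto
  have r0: "r > 0" using fdeg_pos r_def by auto
  define T where "T = (\<Sum>i<r. monom (1::'a) (p ^ i))"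
  have polyT: "poly T x = ftrace x" for x
    unfolding T_def ftrace_def r_def p_def by (simp add: poly_sum poly_monom)
  have inj: "p ^ i = p ^ j \<longleftrightarrow> i = j" for i j using p1 by (simp add: power_inject_exp)
  have "coeff T (p ^ (r - 1)) = (\<Sum>i<r. if i = r - 1 then 1 else 0)"
    unfolding T_def coeff_sum coeff_monom by (intro sum.cong) (auto simp: inj)
  also have "\<dots> = 1" using r0 by simp
  finally have "T \<noteq> 0" by auto
  have "degree T \<le> p ^ (r - 1)"
  proof (rule degree_le, intro allI impI)
    fix n assume n: "p ^ (r - 1) < n"
    have "p ^ i \<noteq> n" if "i < r" for i
    proof -
      have "p ^ i \<le> p ^ (r - 1)" using that p1 by (intro power_increasing) auto
      thus ?thesis using n by auto
    qed
    thus "coeff T n = 0" unfolding T_def coeff_sum coeff_monom by simp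
  qed
  also have "\<dots> < p ^ r" using p1 r0 by (intro power_strict_increasing) auto
  also have "\<dots> = CARD('a)" using fdeg p_def r_def by auto
  finally have "degree T < CARD('a)" .
  moreover have "{x. poly T x = 0} = UNIV" using polyT all0 by auto
  ultimately show False using card_poly_roots_bound[OF \<open>T \<noteq> 0\<close>] by simp
qed


definition tk :: "'a::{field,finite} \<Rightarrow> nat" where
  "tk x = (THE k. k < CHAR('a) \<and> of_nat k = ftrace x)"

lemma tk: "tk x < CHAR('a::{field,finite}) \<and> (of_nat (tk x) :: 'a) = ftrace x"
proof -
  obtain k where k: "k < CHAR('a)" "(of_nat k :: 'a) = ftrace x"
    using prime_field_elem[OF ftrace_pow[of x]] by blast
  have "\<exists>!k. k < CHAR('a) \<and> (of_nat k::'a) = ftrace x"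
    by (rule ex1I[of _ k]) (use k of_nat_inj_char[where 'a='a] in auto)
  thus ?thesis unfolding tk_def by (rule theI')
qed

lemma addchar_tk: "addchar (x::'a::{field,finite}) = cis (2 * pi * real (tk x) / real CHAR('a))"
  unfolding addchar_def tk_def Let_def by simp

lemma cis_mod:
  assumes "p > 0"
  shows "cis (2 * pi * real n / real p) = cis (2 * pi * real (n mod p) / real p)"
proof -
  have "real n = real (n mod p) + real p * real (n div p)"
    by (metis of_nat_add of_nat_mult mod_mult_div_eq add.commute)
  hence e: "2 * pi * real n / real p = 2 * pi * real (n mod p) / real p + 2 * pi * real (n div p)"
    using assms by (simp add: field_simps)
  have "cis (2 * pi * real n / real p) = cis (2 * pi * real (n mod p) / real p) * cis (2 * pi * real (n div p))"
    unfolding e by (rule cis_mult[symmetric])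
  also have "cis (2 * pi * real (n div p)) = 1" by (rule cis_multiple_2pi) simp
  finally show ?thesis by simp
qed

lemma tk_add: "tk (x + y :: 'a::{field,finite}) = (tk x + tk y) mod CHAR('a)"
proof (rule of_nat_inj_char[where 'a='a])
  show "tk (x + y) < CHAR('a)" using tk by blast
  show "(tk x + tk y) mod CHAR('a) < CHAR('a)" using char_gt1[where 'a='a] by simp
  have "(of_nat ((tk x + tk y) mod CHAR('a)) :: 'a) = of_nat (tk x + tk y)"
  proof -
    have "(of_nat (tk x + tk y) :: 'a) = of_nat ((tk x + tk y) mod CHAR('a) + CHAR('a) * ((tk x + tk y) div CHAR('a)))"
      by simp
    also have "\<dots> = of_nat ((tk x + tk y) mod CHAR('a))"
      by (simp only: of_nat_add of_nat_mult of_nat_CHAR mult_zero_left add_0_right)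
    finally show ?thesis by simp
  qed
  also have "\<dots> = ftrace x + ftrace y" using tk[of x] tk[of y] by simp
  also have "\<dots> = ftrace (x + y)" by (simp add: ftrace_add)
  also have "\<dots> = of_nat (tk (x + y))" using tk[of "x+y"] by simp
  finally show "(of_nat (tk (x + y)) :: 'a) = of_nat ((tk x + tk y) mod CHAR('a))" by simp
qed

lemma addchar_add: "addchar (x + y :: 'a::{field,finite}) = addchar x * addchar y"
proof -
  have p0: "CHAR('a) > 0" using char_gt1[where 'a='a] by simp
  have "addchar (x + y) = cis (2 * pi * real ((tk x + tk y) mod CHAR('a)) / real CHAR('a))"
    by (simp add: addchar_tk tk_add)
  also have "\<dots> = cis (2 * pi * real (tk x + tk y) / real CHAR('a))"
    using cis_mod[OF p0] by simp
  also have "\<dots> = cis (2 * pi * real (tk x) / real CHAR('a)) * cis (2 * pi * real (tk y) / real CHAR('a))"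
    by (simp add: cis_mult add_divide_distrib distrib_left)
  finally show ?thesis by (simp add: addchar_tk)
qed

lemma tk_zero: "tk (0::'a::{field,finite}) = 0"
  by (rule of_nat_inj_char[where 'a='a]) (use tk[of "0::'a"] char_gt1[where 'a='a] ftrace_zero in auto)

lemma addchar_zero: "addchar (0::'a::{field,finite}) = 1"
  by (simp add: addchar_tk tk_zero)

lemma norm_addchar: "cmod (addchar (x::'a::{field,finite})) = 1"
  by (simp add: addchar_tk)

lemma addchar_minus: "addchar (- x :: 'a::{field,finite}) = cnj (addchar x)"
proof -
  have "addchar (x + - x) = addchar x * addchar (-x)" by (rule addchar_add)
  hence cd: "addchar x * addchar (-x) = 1" by (simp add: addchar_zero)
  have cc: "addchar x * cnj (addchar x) = 1"
    using complex_norm_square[of "addchar x"] norm_addchar[of x] by simp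
  have "addchar (-x) = addchar (-x) * (addchar x * cnj (addchar x))" using cc by simp
  also have "\<dots> = (addchar x * addchar (-x)) * cnj (addchar x)" by (simp add: mult_ac)
  finally show ?thesis using cd by simp
qed

lemma addchar_nontriv: "\<exists>x::'a::{field,finite}. addchar x \<noteq> 1"
proof -
  obtain x :: 'a where x: "ftrace x \<noteq> 0" using ftrace_nonzero by blast
  define k where "k = tk x"
  define p where "p = CHAR('a)"
  have kp: "k < p" using tk[of x] k_def p_def by auto
  have k0: "k \<noteq> 0" using tk[of x] x k_def by (metis of_nat_0)
  have p0: "p > 0" using char_gt1[where 'a='a] p_def by simp
  have "addchar x \<noteq> 1"
  proof
    assume "addchar x = 1"
    hence "cos (2 * pi * real k / real p) = 1"
      unfolding addchar_tk k_def p_def by (metis Re_complex_of_real cis.sel(1) one_complex.sel(1))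
    then obtain n :: int where n: "2 * pi * real k / real p = real_of_int n * 2 * pi"
      using cos_one_2pi_int by blast
    hence "real k = real_of_int n * real p" using p0 by (simp add: field_simps)
    hence e: "int k = n * int p" by (metis of_int_eq_iff of_int_mult of_int_of_nat_eq)
    show False
    proof (cases "n \<le> 0")
      case True
      hence "n * int p \<le> 0" by (simp add: mult_nonpos_nonneg)
      thus False using e k0 by simp
    next
      case False
      hence "1 * int p \<le> n * int p" by (intro mult_right_mono) auto
      moreover have "int k < int p" using kp by simp
      ultimately show False using e by linarith
    qed
  qed
  thus ?thesis by blast
qed

lemma sum_shift: "(\<Sum>y\<in>UNIV. f (y::'a::{field,finite})) = (\<Sum>y\<in>UNIV. f (y + x0))"
  apply (rule sum.reindex_bij_witness[of UNIV "\<lambda>y. y + x0" "\<lambda>y. y - x0"])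
  apply simp_all
  done

lemma sum_scale: "c \<noteq> 0 \<Longrightarrow> (\<Sum>y\<in>UNIV. f (c * y::'a::{field,finite})) = (\<Sum>y\<in>UNIV. f y)"
  apply (rule sum.reindex_bij_witness[of UNIV "\<lambda>y. y / c" "\<lambda>y. c * y"])
  apply simp_all
  done

lemma sum_addchar: "(\<Sum>y\<in>UNIV. addchar (y::'a::{field,finite})) = 0"
proof -
  obtain x0 :: 'a where x0: "addchar x0 \<noteq> 1" using addchar_nontriv by blast
  define S where "S = (\<Sum>y\<in>UNIV. addchar (y::'a))"
  have "S = (\<Sum>y\<in>UNIV. addchar (y + x0))"
    unfolding S_def by (rule sum_shift)
  also have "\<dots> = S * addchar x0" unfolding S_def by (simp add: addchar_add sum_distrib_right)
  finally have "S * (1 - addchar x0) = 0" by (simp add: algebra_simps)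
  thus ?thesis using x0 S_def by simp
qed

lemma sum_addchar_mult: "(\<Sum>y\<in>UNIV. addchar (c * y::'a::{field,finite})) = (if c = 0 then of_nat CARD('a) else 0)"
proof (cases "c = 0")
  case True thus ?thesis by (simp add: addchar_zero)
next
  case False
  note sum_scale[OF False, of addchar]
  thus ?thesis using False sum_addchar by simp
qed


abbreviation eta :: "'a::{field,finite} \<Rightarrow> complex" where "eta x \<equiv> of_int (qchar x)"

lemma two_ne0: assumes "CHAR('a::{field,finite}) \<noteq> 2" shows "(2::'a) \<noteq> 0"
proof
  assume "(2::'a) = 0"
  hence "(of_nat 2 :: 'a) = 0" by simp
  hence "CHAR('a) dvd 2" by (simp only: of_nat_eq_0_iff_char_dvd)
  hence "CHAR('a) \<le> 2" by (rule dvd_imp_le) simp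
  thus False using assms char_gt1[where 'a='a] by linarith
qed

lemma neg_ne_self: assumes "CHAR('a::{field,finite}) \<noteq> 2" "(y::'a) \<noteq> 0" shows "-y \<noteq> y"
proof
  assume "-y = y"
  hence "y + y = 0" by (metis add.right_inverse)
  hence "2 * y = 0" by (metis mult_2)
  thus False using two_ne0[OF assms(1)] assms(2) by simp
qed

lemma card_sqrt:
  assumes "CHAR('a::{field,finite}) \<noteq> 2"
  shows "of_nat (card {t::'a. t^2 = u}) = 1 + eta u"
proof (cases "u = 0")
  case True
  hence "{t::'a. t^2 = u} = {0}" by auto
  thus ?thesis using True by (simp add: qchar_def)
next
  case False
  show ?thesis
  proof (cases "\<exists>y. y^2 = u")
    case True
    then obtain y where y: "y^2 = u" by blast
    hence y0: "y \<noteq> 0" using False by auto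
    have "{t::'a. t^2 = u} = {y, -y}" using y by (auto simp: power2_eq_iff)
    moreover have "card {y, -y} = 2" using neg_ne_self[OF assms y0] by simp
    ultimately show ?thesis using False True by (simp add: qchar_def)
  next
    case nsq: False
    hence "{t::'a. t^2 = u} = {}" by auto
    thus ?thesis using False nsq by (simp add: qchar_def)
  qed
qed

lemma sum_sq:
  fixes f :: "'a::{field,finite} \<Rightarrow> complex"
  assumes "CHAR('a) \<noteq> 2"
  shows "(\<Sum>t\<in>UNIV. f (t^2)) = (\<Sum>u\<in>UNIV. (1 + eta u) * f u)"
proof -
  have "(\<Sum>u\<in>UNIV. (1 + eta u) * f u) = (\<Sum>u\<in>UNIV. \<Sum>t\<in>UNIV. of_bool (t^2 = u) * f u)"
  proof (intro sum.cong refl)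
    fix u :: 'a
    have "(\<Sum>t\<in>UNIV. of_bool (t^2 = u) * f u) = (\<Sum>t\<in>UNIV. of_bool (t^2 = u)) * f u"
      by (simp add: sum_distrib_right)
    also have "(\<Sum>t\<in>UNIV. of_bool (t^2 = u)) = (of_nat (card {t::'a. t^2 = u}) :: complex)"
      by (simp add: sum_of_bool_eq)
    finally show "(1 + eta u) * f u = (\<Sum>t\<in>UNIV. of_bool (t^2 = u) * f u)"
      using card_sqrt[OF assms, of u] by simp
  qed
  also have "\<dots> = (\<Sum>t\<in>UNIV. \<Sum>u\<in>UNIV. of_bool (t^2 = u) * f u)" by (rule sum.swap)
  also have "\<dots> = (\<Sum>t\<in>UNIV. f (t^2))"
  proof (intro sum.cong refl)
    fix t :: 'a
    have ob: "\<And>u. of_bool (t^2 = u) * f u = (if t^2 = u then f u else 0)" by simp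
    show "(\<Sum>u\<in>UNIV. of_bool (t^2 = u) * f u) = f (t^2)"
      by (simp only: ob) (simp add: sum.delta')
  qed
  finally show ?thesis ..
qed

lemma sum_eta: assumes "CHAR('a::{field,finite}) \<noteq> 2" shows "(\<Sum>u\<in>(UNIV::'a set). eta u) = 0"
proof -
  show ?thesis using sum_sq[OF assms, of "\<lambda>_. 1"] by (simp add: sum.distrib)
qed

lemma sum_qchar: assumes "CHAR('a::{field,finite}) \<noteq> 2" shows "(\<Sum>u\<in>(UNIV::'a set). qchar u) = 0"
proof -
  have "of_int (\<Sum>u\<in>(UNIV::'a set). qchar u) = (0::complex)" using sum_eta[OF assms] by simp
  thus ?thesis by (simp only: of_int_eq_0_iff)
qed

lemma card_QN:
  assumes "CHAR('a::{field,finite}) \<noteq> 2"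
  shows "card {u::'a. qchar u = 1} = card {u::'a. qchar u = -1}"
proof -
  define Q where "Q = {u::'a. qchar u = 1}"
  define N where "N = {u::'a. qchar u = -1}"
  have "(\<Sum>u\<in>(UNIV::'a set). qchar u) = (\<Sum>u\<in>Q \<union> N. qchar u)"
    by (rule sum.mono_neutral_right) (auto simp: Q_def N_def qchar_def)
  also have "\<dots> = (\<Sum>u\<in>Q. qchar u) + (\<Sum>u\<in>N. qchar u)"
    by (rule sum.union_disjoint) (auto simp: Q_def N_def)
  also have "\<dots> = int (card Q) - int (card N)"
    by (simp add: Q_def N_def)
  finally show ?thesis using sum_qchar[OF assms] Q_def N_def by simp
qed

definition issq :: "'a::{field,finite} \<Rightarrow> bool" where "issq u = (\<exists>y. y^2 = u)"

lemma qchar_cases: "qchar u = (if u = 0 then 0 else if issq u then 1 else -1)"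
  by (simp add: qchar_def issq_def)

lemma nonsq_mult:
  assumes "CHAR('a::{field,finite}) \<noteq> 2" "\<not> issq (a::'a)" "\<not> issq b"
  shows "issq (a * b)"
proof -
  define Q where "Q = {u::'a. qchar u = 1}"
  define N where "N = {u::'a. qchar u = -1}"
  have a0: "a \<noteq> 0" using assms(2) unfolding issq_def by (metis zero_power2)
  have "(\<lambda>x. a * x) ` Q \<subseteq> N"
  proof
    fix v assume "v \<in> (\<lambda>x. a * x) ` Q"
    then obtain u where u: "u \<in> Q" "v = a * u" by blast
    then obtain y where y: "y^2 = u" "u \<noteq> 0" unfolding Q_def by (auto simp: qchar_def split: if_splits)
    have "\<not> issq v"
    proof
      assume "issq v"
      then obtain z where z: "z^2 = v" unfolding issq_def by blast
      have y0: "y \<noteq> 0" using y by auto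
      have "(z / y)^2 = a" using z y u y0 by (simp add: power_divide)
      thus False using assms(2) unfolding issq_def by blast
    qed
    moreover have "v \<noteq> 0" using u y a0 by simp
    ultimately show "v \<in> N" unfolding N_def by (simp add: qchar_cases)
  qed
  moreover have "card ((\<lambda>x. a * x) ` Q) = card N"
    using card_QN[OF assms(1)] a0 by (simp add: card_image inj_on_def Q_def N_def)
  ultimately have img: "(\<lambda>x. a * x) ` Q = N" by (intro card_subset_eq) auto
  have b0: "b \<noteq> 0" using assms(3) unfolding issq_def by (metis zero_power2)
  have "b \<in> N" using assms(3) b0 unfolding N_def by (simp add: qchar_cases)
  then obtain u where u: "u \<in> Q" "b = a * u" using img by blast
  then obtain y where y: "y^2 = u" unfolding Q_def by (auto simp: qchar_def split: if_splits)
  have "(a * y)^2 = a * b" using u y by (simp add: power2_eq_square)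
  thus ?thesis unfolding issq_def by blast
qed

lemma qchar_mult:
  assumes "CHAR('a::{field,finite}) \<noteq> 2"
  shows "qchar ((a::'a) * b) = qchar a * qchar b"
proof (cases "a = 0 \<or> b = 0")
  case True thus ?thesis by (auto simp: qchar_def)
next
  case False
  hence a0: "a \<noteq> 0" and b0: "b \<noteq> 0" by auto
  have ab0: "a * b \<noteq> 0" using a0 b0 by simp
  show ?thesis
  proof (cases "issq a"; cases "issq b")
    assume "issq a" "issq b"
    then obtain y z where "y^2 = a" "z^2 = b" unfolding issq_def by blast
    hence "(y*z)^2 = a * b" by (simp add: power_mult_distrib)
    hence "issq (a*b)" unfolding issq_def by blast
    thus ?thesis using \<open>issq a\<close> \<open>issq b\<close> a0 b0 ab0 by (simp add: qchar_cases)
  next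
    assume "issq a" "\<not> issq b"
    then obtain y where y: "y^2 = a" unfolding issq_def by blast
    have "\<not> issq (a*b)"
    proof
      assume "issq (a*b)"
      then obtain w where "w^2 = a * b" unfolding issq_def by blast
      hence "(w/y)^2 = b" using y a0 by (simp add: power_divide)
      thus False using \<open>\<not> issq b\<close> unfolding issq_def by blast
    qed
    thus ?thesis using \<open>issq a\<close> \<open>\<not> issq b\<close> a0 b0 ab0 by (simp add: qchar_cases)
  next
    assume "\<not> issq a" "issq b"
    then obtain y where y: "y^2 = b" unfolding issq_def by blast
    have "\<not> issq (a*b)"
    proof
      assume "issq (a*b)"
      then obtain w where "w^2 = a * b" unfolding issq_def by blast
      hence "(w/y)^2 = a" using y b0 by (simp add: power_divide)
      thus False using \<open>\<not> issq a\<close> unfolding issq_def by blast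
    qed
    thus ?thesis using \<open>\<not> issq a\<close> \<open>issq b\<close> a0 b0 ab0 by (simp add: qchar_cases)
  next
    assume "\<not> issq a" "\<not> issq b"
    hence "issq (a*b)" by (rule nonsq_mult[OF assms])
    thus ?thesis using \<open>\<not> issq a\<close> \<open>\<not> issq b\<close> a0 b0 ab0 by (simp add: qchar_cases)
  qed
qed

lemma qchar_sq: "(c::'a::{field,finite}) \<noteq> 0 \<Longrightarrow> qchar (c^2) = 1"
  by (auto simp: qchar_def)

lemma qchar_sq_mult: "(a::'a::{field,finite}) \<noteq> 0 \<Longrightarrow> qchar a * qchar a = 1"
  by (auto simp: qchar_def)

lemma qchar_inverse:
  assumes "CHAR('a::{field,finite}) \<noteq> 2"
  shows "qchar (inverse (a::'a)) = qchar a"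
proof (cases "a = 0")
  case True thus ?thesis by simp
next
  case False
  have "a^2 * inverse a = a" using False by (simp add: power2_eq_square)
  hence "qchar a = qchar (a^2 * inverse a)" by simp
  also have "\<dots> = qchar (inverse a)" using False qchar_sq[of a] by (simp add: qchar_mult[OF assms])
  finally show ?thesis ..
qed


lemma gauss_UNIV: "gauss1 TYPE('a::{field,finite}) = (\<Sum>s\<in>UNIV. eta (s::'a) * addchar s)"
proof -
  have "(\<Sum>s\<in>UNIV. eta (s::'a) * addchar s) = eta (0::'a) * addchar (0::'a) + (\<Sum>s\<in>UNIV - {0}. eta (s::'a) * addchar s)"
    by (rule sum.remove) auto
  thus ?thesis by (simp add: gauss1_def qchar_def)
qed

lemma gauss_twist:
  assumes "CHAR('a::{field,finite}) \<noteq> 2"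
  shows "(\<Sum>s\<in>UNIV. eta s * addchar (a * s)) = eta (a::'a) * gauss1 TYPE('a)"
proof (cases "a = 0")
  case True
  thus ?thesis using sum_eta[OF assms] by (simp add: addchar_zero qchar_def)
next
  case False
  have "(\<Sum>s\<in>UNIV. eta s * addchar (a * s)) = (\<Sum>s\<in>UNIV. eta (s / a) * addchar s)"
    using sum_scale[OF False, of "\<lambda>y. eta (y / a) * addchar y"] False by simp
  also have "\<dots> = (\<Sum>s\<in>UNIV. eta a * (eta (s::'a) * addchar s))"
  proof (intro sum.cong refl)
    fix s
    have "qchar (s / a) = qchar s * qchar a"
      by (simp add: divide_inverse qchar_mult[OF assms] qchar_inverse[OF assms])
    thus "eta (s / a) * addchar s = eta a * (eta s * addchar s)" by (simp add: mult_ac)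
  qed
  also have "\<dots> = eta a * gauss1 TYPE('a)" by (simp add: gauss_UNIV sum_distrib_left)
  finally show ?thesis .
qed

lemma gauss_sq:
  assumes "CHAR('a::{field,finite}) \<noteq> 2" "(s::'a) \<noteq> 0"
  shows "(\<Sum>t\<in>UNIV. addchar (s * t^2)) = eta s * gauss1 TYPE('a)"
proof -
  have "(\<Sum>t\<in>UNIV. addchar (s * t^2)) = (\<Sum>u\<in>UNIV. (1 + eta u) * addchar (s * u))"
    by (rule sum_sq[OF assms(1), of "\<lambda>u. addchar (s * u)"])
  also have "\<dots> = (\<Sum>u\<in>UNIV. addchar (s * u)) + (\<Sum>u\<in>UNIV. eta u * addchar (s * u))"
    by (simp add: distrib_right sum.distrib)
  also have "\<dots> = eta s * gauss1 TYPE('a)"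
    using sum_addchar_mult[of s] assms(2) gauss_twist[OF assms(1), of s] by simp
  finally show ?thesis .
qed

lemma gauss_quad:
  assumes "CHAR('a::{field,finite}) \<noteq> 2" "(s::'a) \<noteq> 0"
  shows "(\<Sum>t\<in>UNIV. addchar (s * t^2 + b * t)) = addchar (- (b^2 / (4 * s))) * (eta s * gauss1 TYPE('a))"
proof -
  define c where "c = - b / (2 * s)"
  have two: "(2::'a) \<noteq> 0" by (rule two_ne0[OF assms(1)])
  have four: "(4::'a) \<noteq> 0"
  proof -
    have "(4::'a) = 2 * 2" by simp
    thus ?thesis using two by (metis mult_eq_0_iff)
  qed
  have sc: "2 * s * c = - b" unfolding c_def using two assms(2) by (simp add: field_simps)
  have cc: "c * (s * c + b) = - (b^2 / (4 * s))"
    unfolding c_def using two four assms(2) by (simp add: field_simps power2_eq_square)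
  have id: "s * (t + c)^2 + b * (t + c) = s * t^2 + (- (b^2 / (4 * s)))" for t
  proof -
    have "s * (t + c)^2 + b * (t + c) = s * t^2 + (2 * s * c + b) * t + c * (s * c + b)"
      by (simp add: power2_eq_square algebra_simps)
    thus ?thesis using sc cc by simp
  qed
  have "(\<Sum>t\<in>UNIV. addchar (s * t^2 + b * t)) = (\<Sum>t\<in>UNIV. addchar (s * (t + c)^2 + b * (t + c)))"
    by (rule sum_shift[of "\<lambda>t. addchar (s * t^2 + b * t)" c])
  also have "\<dots> = (\<Sum>t\<in>UNIV. addchar (s * t^2) * addchar (- (b^2 / (4 * s))))"
    by (simp only: id addchar_add)
  also have "\<dots> = addchar (- (b^2 / (4 * s))) * (eta s * gauss1 TYPE('a))"
    using gauss_sq[OF assms] by (simp add: sum_distrib_right[symmetric] mult_ac)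
  finally show ?thesis .
qed

lemma gauss_square:
  assumes "CHAR('a::{field,finite}) \<noteq> 2"
  shows "gauss1 TYPE('a) ^ 2 = eta (-1::'a) * of_nat CARD('a)"
proof -
  define g where "g = gauss1 TYPE('a)"
  have "g ^ 2 = (\<Sum>s\<in>UNIV. eta (s::'a) * addchar s) * g" unfolding g_def by (simp add: power2_eq_square gauss_UNIV)
  also have "\<dots> = (\<Sum>s\<in>UNIV. addchar s * (eta (s::'a) * g))"
    unfolding sum_distrib_right by (rule sum.cong) (simp_all add: mult_ac)
  also have "\<dots> = (\<Sum>s\<in>UNIV. addchar s * (\<Sum>t\<in>UNIV. eta (t::'a) * addchar (s * t)))"
    unfolding g_def by (simp add: gauss_twist[OF assms])
  also have "\<dots> = (\<Sum>s\<in>UNIV. \<Sum>t\<in>UNIV. eta (t::'a) * addchar (s * (1 + t)))"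
    unfolding sum_distrib_left
  proof (intro sum.cong refl)
    fix s t :: 'a
    have "addchar (s * (1 + t)) = addchar s * addchar (s * t)"
      by (simp add: distrib_left addchar_add)
    thus "addchar s * (eta t * addchar (s * t)) = eta t * addchar (s * (1 + t))" by (simp add: mult_ac)
  qed
  also have "\<dots> = (\<Sum>t\<in>UNIV. eta (t::'a) * (\<Sum>s\<in>UNIV. addchar ((1 + t) * s)))"
    by (subst sum.swap) (simp add: sum_distrib_left mult_ac)
  also have "\<dots> = (\<Sum>t\<in>UNIV. if t = -1 then eta (t::'a) * of_nat CARD('a) else 0)"
  proof (intro sum.cong refl)
    fix t :: 'a
    have "(1 + t = 0) = (t = -1)" by (simp add: add_eq_0_iff)
    thus "eta t * (\<Sum>s\<in>UNIV. addchar ((1 + t) * s)) = (if t = -1 then eta t * of_nat CARD('a) else 0)"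
      by (simp add: sum_addchar_mult)
  qed
  also have "\<dots> = eta (-1::'a) * of_nat CARD('a)" by (simp add: sum.delta)
  finally show ?thesis unfolding g_def .
qed

lemma eta_sq: "(a::'a::{field,finite}) \<noteq> 0 \<Longrightarrow> eta a * eta a = 1"
  by (auto simp: qchar_def)

lemma gauss_ne0:
  assumes "CHAR('a::{field,finite}) \<noteq> 2"
  shows "gauss1 TYPE('a) \<noteq> 0"
proof
  assume "gauss1 TYPE('a) = 0"
  hence "eta (-1::'a) * of_nat CARD('a) = 0" using gauss_square[OF assms] by simp
  moreover have "eta (-1::'a) \<noteq> 0" by (simp add: qchar_def)
  ultimately show False by simp
qed


lemma addchar_sum: "addchar (\<Sum>i\<in>I. f i :: 'a::{field,finite}) = (\<Prod>i\<in>I. addchar (f i))"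
  by (induction I rule: infinite_finite_induct) (auto simp: addchar_zero addchar_add)

lemma sum_vec_prod:
  fixes g :: "'n::finite \<Rightarrow> 'a::finite \<Rightarrow> complex"
  shows "(\<Sum>m\<in>(UNIV::('a^'n) set). \<Prod>i\<in>UNIV. g i (m $ i)) = (\<Prod>i\<in>UNIV. \<Sum>t\<in>UNIV. g i t)"
proof -
  have "(\<Prod>i\<in>UNIV. \<Sum>t\<in>UNIV. g i t) = (\<Sum>f\<in>PiE UNIV (\<lambda>_. UNIV). \<Prod>i\<in>UNIV. g i (f i))"
    by (rule prod_sum_PiE) auto
  also have "PiE UNIV (\<lambda>_::'n. UNIV::'a set) = UNIV" by (rule PiE_UNIV)
  also have "(\<Sum>f\<in>UNIV. \<Prod>i\<in>UNIV. g i (f i)) = (\<Sum>m\<in>(UNIV::('a^'n) set). \<Prod>i\<in>UNIV. g i (m $ i))"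
    by (rule sum.reindex_bij_witness[of _ vec_nth vec_lambda]) auto
  finally show ?thesis ..
qed

lemma fnorm_fdot_sum:
  "s * fnorm m + fdot m z = (\<Sum>i\<in>UNIV. s * (m$i)^2 + (z$i) * (m$i))"
  by (simp add: fnorm_def fdot_def sum.distrib sum_distrib_left mult_ac)

lemma inner_gauss:
  assumes "CHAR('a::{field,finite}) \<noteq> 2" "(s::'a) \<noteq> 0"
  shows "(\<Sum>m\<in>(UNIV::('a^'n::finite) set). addchar (s * fnorm m + fdot m z))
         = addchar (- (fnorm z / (4 * s))) * (eta s * gauss1 TYPE('a)) ^ CARD('n)"
proof -
  have "(\<Sum>m\<in>(UNIV::('a^'n) set). addchar (s * fnorm m + fdot m z))
      = (\<Sum>m\<in>(UNIV::('a^'n) set). \<Prod>i\<in>UNIV. addchar (s * (m$i)^2 + (z$i) * (m$i)))"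
    by (simp only: fnorm_fdot_sum addchar_sum)
  also have "\<dots> = (\<Prod>i\<in>UNIV. \<Sum>t\<in>UNIV. addchar (s * t^2 + (z$i) * t))"
    by (rule sum_vec_prod[of "\<lambda>i t. addchar (s * t^2 + (z$i) * t)"])
  also have "\<dots> = (\<Prod>i\<in>(UNIV::'n set). addchar (- ((z$i)^2 / (4 * s))) * (eta s * gauss1 TYPE('a)))"
    by (intro prod.cong refl gauss_quad[OF assms])
  also have "\<dots> = (\<Prod>i\<in>(UNIV::'n set). addchar (- ((z$i)^2 / (4 * s)))) * (eta s * gauss1 TYPE('a)) ^ CARD('n)"
    by (simp add: prod.distrib)
  also have "(\<Prod>i\<in>(UNIV::'n set). addchar (- ((z$i)^2 / (4 * s)))) = addchar (\<Sum>i\<in>(UNIV::'n set). - ((z$i)^2 / (4 * s)))"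
    by (simp only: addchar_sum)
  also have "(\<Sum>i\<in>(UNIV::'n set). - ((z$i)^2 / (4 * s))) = - (fnorm z / (4 * s))"
    by (simp add: fnorm_def sum_negf sum_divide_distrib)
  finally show ?thesis .
qed

lemma eta_pow_even:
  assumes "(s::'a::{field,finite}) \<noteq> 0" "even d"
  shows "eta s ^ d = 1"
proof -
  obtain k where k: "d = 2 * k" using assms(2) by blast
  have "eta s ^ d = (eta s * eta s) ^ k" by (simp add: k power_mult power2_eq_square)
  also have "eta s * eta s = 1" using eta_sq[OF assms(1)] .
  finally show ?thesis by simp
qed

lemma neg_div4: "- (a / (4 * s)) = ((-1) * a * inverse 4) * inverse (s::'a::field)"
proof -
  have "a / (4 * s) = a * (inverse 4 * inverse s)" by (simp only: divide_inverse inverse_mult_distrib)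
  thus ?thesis by (simp only: mult.assoc minus_mult_left mult_minus1 mult_1_left)
qed

lemma K_formula:
  assumes "CHAR('a::{field,finite}) \<noteq> 2" "even CARD('n::finite)"
  shows "(\<Sum>m\<in>(UNIV::('a^'n) set). eta (fnorm m) * addchar (fdot m z))
         = gauss1 TYPE('a) ^ CARD('n) * eta (-1::'a) * eta (fnorm z)"
proof -
  define d where "d = CARD('n)"
  define g where "g = gauss1 TYPE('a)"
  define c where "c = (-1) * fnorm z * inverse (4::'a)"
  have g0: "g \<noteq> 0" using gauss_ne0[OF assms(1)] g_def by simp
  have "g * (\<Sum>m\<in>(UNIV::('a^'n) set). eta (fnorm m) * addchar (fdot m z))
      = (\<Sum>m\<in>(UNIV::('a^'n) set). (eta (fnorm m) * g) * addchar (fdot m z))"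
    by (simp add: sum_distrib_left mult_ac)
  also have "\<dots> = (\<Sum>m\<in>(UNIV::('a^'n) set). (\<Sum>s\<in>UNIV. eta (s::'a) * addchar (fnorm m * s)) * addchar (fdot m z))"
    using gauss_twist[OF assms(1)] g_def by simp
  also have "\<dots> = (\<Sum>m\<in>(UNIV::('a^'n) set). \<Sum>s\<in>UNIV. eta (s::'a) * addchar (s * fnorm m + fdot m z))"
    unfolding sum_distrib_right
    by (intro sum.cong refl) (simp add: addchar_add mult_ac)
  also have "\<dots> = (\<Sum>s\<in>UNIV. eta (s::'a) * (\<Sum>m\<in>(UNIV::('a^'n) set). addchar (s * fnorm m + fdot m z)))"
    by (subst sum.swap) (simp add: sum_distrib_left)
  also have "\<dots> = (\<Sum>s\<in>UNIV. eta (s::'a) * (addchar (c * inverse s) * g ^ d))"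
  proof (intro sum.cong refl)
    fix s :: 'a
    show "eta s * (\<Sum>m\<in>(UNIV::('a^'n) set). addchar (s * fnorm m + fdot m z)) = eta s * (addchar (c * inverse s) * g ^ d)"
    proof (cases "s = 0")
      case True thus ?thesis by (simp add: qchar_def)
    next
      case False
      have e1: "eta s * eta s ^ d = eta s" using eta_pow_even[OF False assms(2)] d_def by simp
      have e2: "- (fnorm z / (4 * s)) = c * inverse s" unfolding c_def
        by (rule neg_div4)
      have "eta s * (\<Sum>m\<in>(UNIV::('a^'n) set). addchar (s * fnorm m + fdot m z))
          = eta s * (addchar (c * inverse s) * (eta s ^ d * g ^ d))"
        using inner_gauss[OF assms(1) False, where 'n='n, of z] unfolding e2 d_def g_def power_mult_distrib
        by simp
      also have "\<dots> = (eta s * eta s ^ d) * (addchar (c * inverse s) * g ^ d)" by (simp add: mult_ac)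
      finally show ?thesis using e1 by simp
    qed
  qed
  also have "\<dots> = g ^ d * (\<Sum>s\<in>UNIV. eta (s::'a) * addchar (c * inverse s))"
    by (simp add: sum_distrib_left mult_ac)
  also have "(\<Sum>s\<in>UNIV. eta (s::'a) * addchar (c * inverse s)) = (\<Sum>s\<in>UNIV. eta (s::'a) * addchar (c * s))"
    by (rule sum.reindex_bij_witness[of _ inverse inverse]) (auto simp: qchar_inverse[OF assms(1)])
  also have "\<dots> = eta c * g" using gauss_twist[OF assms(1), of c] g_def by simp
  also have "eta c = eta (-1::'a) * eta (fnorm z)"
  proof -
    have two: "(2::'a) \<noteq> 0" by (rule two_ne0[OF assms(1)])
    have "qchar ((2::'a) ^ 2) = 1" by (rule qchar_sq[OF two])
    hence "qchar (4::'a) = 1" by simp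
    hence q4: "qchar (inverse (4::'a)) = 1" by (metis qchar_inverse[OF assms(1)])
    have h1: "qchar c = qchar ((-1::'a) * fnorm z) * qchar (inverse (4::'a))"
      unfolding c_def by (rule qchar_mult[OF assms(1)])
    have h2: "qchar ((-1::'a) * fnorm z) = qchar (-1::'a) * qchar (fnorm z)"
      by (rule qchar_mult[OF assms(1)])
    have "qchar c = qchar (-1::'a) * qchar (fnorm z)" using h1 h2 q4 by simp
    thus ?thesis by simp
  qed
  finally have "g * (\<Sum>m\<in>(UNIV::('a^'n) set). eta (fnorm m) * addchar (fdot m z))
      = g * (g ^ d * eta (-1::'a) * eta (fnorm z))" by (simp add: mult_ac)
  thus ?thesis using g0 unfolding g_def d_def by simp
qed


lemma fdot_diff: "fdot m (y - x) = fdot m y - fdot m x"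
  unfolding fdot_def by (simp add: sum_subtractf right_diff_distrib)

lemma fnorm_swap: "fnorm (x - y) = fnorm (y - x)"
  unfolding fnorm_def by (simp add: power2_commute)

lemma cnj_addchar_neg: "cnj (addchar (- u :: 'a::{field,finite})) = addchar u"
  using addchar_minus[of "-u"] by simp

lemma addchar_pair: "addchar (- fdot m x) * addchar (fdot m y) = addchar (fdot m (y - x))"
proof -
  have "fdot m (y - x) = - fdot m x + fdot m y" by (simp add: fdot_diff)
  moreover have "addchar (- fdot m x + fdot m y) = addchar (- fdot m x) * addchar (fdot m y)"
    by (rule addchar_add)
  ultimately show ?thesis by simp
qed

lemma fourier_sq:
  fixes A :: "('a::{field,finite} ^ 'n::finite) set"
  shows "complex_of_real ((cmod (fourier A m))^2)
    = (\<Sum>x\<in>A. \<Sum>y\<in>A. addchar (fdot m (y - x))) / (of_nat CARD('a) ^ CARD('n))^2"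
proof -
  define S where "S = (\<Sum>x\<in>A. addchar (- fdot m x))"
  define Q where "Q = (of_nat CARD('a) ^ CARD('n) :: complex)"
  have f: "fourier A m = S / Q" unfolding fourier_def S_def Q_def ..
  have cQ: "cnj Q = Q" unfolding Q_def by simp
  have cS: "cnj S = (\<Sum>y\<in>A. addchar (fdot m y))" unfolding S_def by (simp add: cnj_addchar_neg)
  have "complex_of_real ((cmod (fourier A m))^2) = fourier A m * cnj (fourier A m)"
    by (rule complex_norm_square)
  also have "\<dots> = S * cnj S / Q^2" unfolding f using cQ by (simp add: power2_eq_square)
  also have "S * cnj S = (\<Sum>x\<in>A. \<Sum>y\<in>A. addchar (- fdot m x) * addchar (fdot m y))"
    unfolding cS unfolding S_def by (rule sum_product)
  also have "\<dots> = (\<Sum>x\<in>A. \<Sum>y\<in>A. addchar (fdot m (y - x)))"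
    by (intro sum.cong refl) (rule addchar_pair)
  finally show ?thesis unfolding Q_def .
qed

lemma OmegaPM:
  fixes A :: "('a::{field,finite} ^ 'n::finite) set"
  shows "OmegaP A - OmegaM A = (\<Sum>m\<in>UNIV. real_of_int (qchar (fnorm m)) * (cmod (fourier A m))^2)"
proof -
  define w where "w m = (cmod (fourier A m))^2" for m
  define P where "P = {m::'a^'n. qchar (fnorm m) = 1}"
  define M where "M = {m::'a^'n. qchar (fnorm m) = -1}"
  have "(\<Sum>m\<in>UNIV. real_of_int (qchar (fnorm m)) * w m) = (\<Sum>m\<in>P \<union> M. real_of_int (qchar (fnorm m)) * w m)"
    by (rule sum.mono_neutral_right) (auto simp: P_def M_def qchar_def)
  also have "\<dots> = (\<Sum>m\<in>P. real_of_int (qchar (fnorm m)) * w m) + (\<Sum>m\<in>M. real_of_int (qchar (fnorm m)) * w m)"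
    by (rule sum.union_disjoint) (auto simp: P_def M_def)
  also have "(\<Sum>m\<in>P. real_of_int (qchar (fnorm m)) * w m) = (\<Sum>m\<in>P. w m)"
    by (rule sum.cong) (auto simp: P_def)
  also have "(\<Sum>m\<in>M. real_of_int (qchar (fnorm m)) * w m) = (\<Sum>m\<in>M. - w m)"
    by (rule sum.cong) (auto simp: M_def)
  finally have "(\<Sum>m\<in>UNIV. real_of_int (qchar (fnorm m)) * w m) = (\<Sum>m\<in>P. w m) - (\<Sum>m\<in>M. w m)"
    by (simp add: sum_negf)
  thus ?thesis unfolding OmegaP_def OmegaM_def w_def P_def M_def by simp
qed

lemma SQ_ZR:
  fixes A :: "('a::{field,finite} ^ 'n::finite) set"
  shows "real (SQ A) + real (ZR A) / 2
    = real (card A)^2 / 2 + (\<Sum>x\<in>A. \<Sum>y\<in>A. real_of_int (qchar (fnorm (x - y)))) / 2"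
proof -
  define v where "v p = qchar (fnorm (fst p - snd p))" for p :: "('a^'n) \<times> ('a^'n)"
  have fin: "finite (A \<times> A)" by simp
  have s1: "SQ A = card ((A \<times> A) \<inter> {p. v p = 1})"
    unfolding SQ_def v_def by (rule arg_cong[where f=card]) auto
  have s0: "ZR A = card ((A \<times> A) \<inter> {p. v p = 0})"
    unfolding ZR_def v_def by (rule arg_cong[where f=card]) auto
  have r1: "real (SQ A) = (\<Sum>p\<in>A \<times> A. of_bool (v p = 1))"
    unfolding s1 using fin by (simp add: sum_of_bool_eq)
  have r0: "real (ZR A) = (\<Sum>p\<in>A \<times> A. of_bool (v p = 0))"
    unfolding s0 using fin by (simp add: sum_of_bool_eq)
  have rc: "real (card A)^2 = (\<Sum>p\<in>A \<times> A. 1)"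
    by (simp add: card_cartesian_product power2_eq_square)
  have rt: "(\<Sum>x\<in>A. \<Sum>y\<in>A. real_of_int (qchar (fnorm (x - y)))) = (\<Sum>p\<in>A \<times> A. real_of_int (v p))"
    unfolding sum.cartesian_product v_def by (intro sum.cong refl) (auto simp: split_beta)
  have pt: "of_bool (v p = 1) + of_bool (v p = 0) / 2 = 1 / 2 + real_of_int (v p) / 2" for p
  proof -
    have "v p = 1 \<or> v p = 0 \<or> v p = -1" by (auto simp: v_def qchar_def)
    thus ?thesis by auto
  qed
  have "real (SQ A) + real (ZR A) / 2 = (\<Sum>p\<in>A \<times> A. of_bool (v p = 1)) + (\<Sum>p\<in>A \<times> A. of_bool (v p = 0)) / 2"
    unfolding r1 r0 ..
  also have "\<dots> = (\<Sum>p\<in>A \<times> A. of_bool (v p = 1) + of_bool (v p = 0) / 2)"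
    by (simp only: sum.distrib sum_divide_distrib)
  also have "\<dots> = (\<Sum>p\<in>A \<times> A. 1 / 2 + real_of_int (v p) / 2)" using pt by simp
  also have "\<dots> = real (card A)^2 / 2 + (\<Sum>p\<in>A \<times> A. real_of_int (v p)) / 2"
    by (simp only: rc sum.distrib sum_divide_distrib)
  finally show ?thesis unfolding rt .
qed


lemma alg1: "(x::'b::field_char_0) + y * (p - m) / 2 = x + y / 2 * p - y / 2 * m"
  by (simp add: field_simps)

lemma W_formula:
  fixes A :: "('a::{field,finite} ^ 'n::finite) set"
  assumes "CHAR('a) \<noteq> 2" "even CARD('n)"
  shows "complex_of_real (OmegaP A - OmegaM A) * ((of_nat CARD('a) :: complex) ^ CARD('n))^2
    = gauss1 TYPE('a) ^ CARD('n) * eta (-1::'a) * (\<Sum>x\<in>A. \<Sum>y\<in>A. eta (fnorm (x - y)))"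
proof -
  define Q where "Q = ((of_nat CARD('a) :: complex) ^ CARD('n))^2"
  define c where "c = gauss1 TYPE('a) ^ CARD('n) * eta (-1::'a)"
  have Q0: "Q \<noteq> 0" unfolding Q_def by simp
  have "complex_of_real (OmegaP A - OmegaM A)
      = (\<Sum>m\<in>UNIV. eta (fnorm m) * complex_of_real ((cmod (fourier A m))^2))"
    unfolding OmegaPM by (simp add: of_real_sum)
  also have "\<dots> = (\<Sum>m\<in>UNIV. eta (fnorm m) * ((\<Sum>x\<in>A. \<Sum>y\<in>A. addchar (fdot m (y - x))) / Q))"
    unfolding Q_def by (simp only: fourier_sq)
  also have "\<dots> = (\<Sum>m\<in>UNIV. \<Sum>x\<in>A. \<Sum>y\<in>A. eta (fnorm m) * addchar (fdot m (y - x))) / Q"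
    by (simp add: sum_distrib_left sum_divide_distrib)
  also have "\<dots> = (\<Sum>x\<in>A. \<Sum>y\<in>A. \<Sum>m\<in>UNIV. eta (fnorm m) * addchar (fdot m (y - x))) / Q"
    by (simp add: sum.swap[of _ UNIV])
  also have "\<dots> = (\<Sum>x\<in>A. \<Sum>y\<in>A. c * eta (fnorm (x - y))) / Q"
  proof -
    have "(\<Sum>m\<in>UNIV. eta (fnorm m) * addchar (fdot m (y - x))) = c * eta (fnorm (x - y))" for x y :: "'a^'n"
      using K_formula[OF assms, of "y - x"] unfolding c_def by (simp add: fnorm_swap)
    thus ?thesis by simp
  qed
  also have "\<dots> = c * (\<Sum>x\<in>A. \<Sum>y\<in>A. eta (fnorm (x - y))) / Q"
    by (simp add: sum_distrib_left)
  finally show ?thesis using Q0 unfolding Q_def[symmetric] c_def by simp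
qed

theorem proposition3p3:
  fixes A :: "('a::{field,finite} ^ 'n) set"
  assumes "CHAR('a) \<noteq> 2"
    and "even CARD('n)" and "CARD('n) \<ge> 2"
  shows "(of_nat (SQ A) + of_nat (ZR A) / 2 =
           of_nat (card A) ^ 2 / 2
           + of_nat CARD('a) ^ (CARD('n) - 1) * gauss1 TYPE('a) ^ (CARD('n) + 2) / 2 * of_real (OmegaP A)
           - of_nat CARD('a) ^ (CARD('n) - 1) * gauss1 TYPE('a) ^ (CARD('n) + 2) / 2 * of_real (OmegaM A)) \<and>
         (CARD('n) mod 4 = 2 \<longrightarrow>
         real (SQ A) + real (ZR A) / 2 =
           real (card A) ^ 2 / 2
           + real CARD('a) ^ (3 * CARD('n) div 2) / 2 * OmegaP A
           - real CARD('a) ^ (3 * CARD('n) div 2) / 2 * OmegaM A)"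
proof -
  define q where "q = (of_nat CARD('a) :: complex)"
  define d where "d = CARD('n)"
  define g where "g = gauss1 TYPE('a)"
  define e where "e = eta (-1::'a)"
  define Tr where "Tr = (\<Sum>x\<in>A. \<Sum>y\<in>A. real_of_int (qchar (fnorm (x - y))))"
  define T where "T = (\<Sum>x\<in>A. \<Sum>y\<in>A. eta (fnorm (x - y)))"
  define W where "W = complex_of_real (OmegaP A - OmegaM A)"
  have q0: "q \<noteq> 0" by (simp add: q_def)
  have ee: "e * e = 1" unfolding e_def by (rule eta_sq) simp
  have gsq: "g^2 = e * q" using gauss_square[OF assms(1)] unfolding g_def e_def q_def .
  have TT: "complex_of_real Tr = T" unfolding Tr_def T_def by (simp add: of_real_sum)
  have We: "W * (q ^ d)^2 = g ^ d * e * T"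
    using W_formula[OF assms(1,2), of A] unfolding W_def q_def d_def g_def e_def T_def .
  obtain k where k: "d = 2 * k" using assms(2) d_def by blast
  have k1: "k \<ge> 1" using assms(3) k d_def by simp
  have ed: "e ^ d = 1" unfolding k power_mult using ee by (simp add: power2_eq_square)
  have g2d: "g ^ (d + 2) * g ^ d * e = q ^ (d + 1)"
  proof -
    have ex: "d + 2 + d = 2 * (d + 1)" by simp
    have "g ^ (d + 2) * g ^ d = g ^ (2 * (d + 1))" by (simp only: power_add[symmetric] ex)
    also have "\<dots> = (g^2) ^ (d + 1)" by (simp only: power_mult)
    also have "\<dots> = e ^ (d + 1) * q ^ (d + 1)" by (simp add: gsq power_mult_distrib)
    finally have "g ^ (d + 2) * g ^ d * e = e ^ d * (e * e) * q ^ (d + 1)" by (simp add: mult_ac)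
    thus ?thesis using ed ee by simp
  qed
  have key: "q ^ (d - 1) * g ^ (d + 2) * W = T"
  proof -
    have "(q ^ (d - 1) * g ^ (d + 2) * W) * (q ^ d)^2 = q ^ (d - 1) * (g ^ (d + 2) * g ^ d * e) * T"
      using We by (simp add: mult_ac)
    also have "\<dots> = q ^ (d - 1) * q ^ (d + 1) * T" using g2d by simp
    also have "q ^ (d - 1) * q ^ (d + 1) = (q ^ d)^2"
    proof -
      have ex: "d - 1 + (d + 1) = d * 2" using k k1 by simp
      have "q ^ (d - 1) * q ^ (d + 1) = q ^ (d * 2)" by (simp only: power_add[symmetric] ex)
      thus ?thesis by (simp only: power_mult)
    qed
    finally have "(q ^ (d - 1) * g ^ (d + 2) * W) * (q ^ d)^2 = T * (q ^ d)^2" by (simp add: mult_ac)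
    thus ?thesis using q0 by simp
  qed
  have R: "real (SQ A) + real (ZR A) / 2 = real (card A)^2 / 2 + Tr / 2"
    unfolding Tr_def by (rule SQ_ZR)
  have C: "complex_of_real (real (SQ A) + real (ZR A) / 2) = of_nat (card A)^2 / 2 + T / 2"
    unfolding R TT[symmetric] by simp
  show ?thesis
  proof
    have "(of_nat (SQ A) + of_nat (ZR A) / 2 :: complex) = complex_of_real (real (SQ A) + real (ZR A) / 2)"
      by simp
    also have "\<dots> = of_nat (card A)^2 / 2 + q ^ (d - 1) * g ^ (d + 2) * W / 2"
      unfolding C key ..
    also have "\<dots> = of_nat (card A)^2 / 2 + q ^ (d - 1) * g ^ (d + 2) / 2 * of_real (OmegaP A)
        - q ^ (d - 1) * g ^ (d + 2) / 2 * of_real (OmegaM A)"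
      unfolding W_def of_real_diff by (rule alg1)
    finally show "(of_nat (SQ A) + of_nat (ZR A) / 2 :: complex) =
           of_nat (card A) ^ 2 / 2
           + of_nat CARD('a) ^ (CARD('n) - 1) * gauss1 TYPE('a) ^ (CARD('n) + 2) / 2 * of_real (OmegaP A)
           - of_nat CARD('a) ^ (CARD('n) - 1) * gauss1 TYPE('a) ^ (CARD('n) + 2) / 2 * of_real (OmegaM A)"
      unfolding q_def d_def g_def .
  next
    show "CARD('n) mod 4 = 2 \<longrightarrow>
         real (SQ A) + real (ZR A) / 2 =
           real (card A) ^ 2 / 2
           + real CARD('a) ^ (3 * CARD('n) div 2) / 2 * OmegaP A
           - real CARD('a) ^ (3 * CARD('n) div 2) / 2 * OmegaM A"
    proof
      assume m4: "CARD('n) mod 4 = 2"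
      hence "odd k" using k d_def by presburger
      then obtain i where "k = 2 * i + 1" by (rule oddE)
      hence j: "k + 1 = 2 * (i + 1)" by simp
      have ex2: "d + 2 = 2 * (k + 1)" using k by simp
      have "g ^ (d + 2) = (g^2) ^ (k + 1)" by (simp only: ex2 power_mult)
      also have "\<dots> = e ^ (k + 1) * q ^ (k + 1)" by (simp only: gsq power_mult_distrib)
      also have "e ^ (k + 1) = 1" unfolding j power_mult power2_eq_square[symmetric] ee
        using ee by (simp add: power2_eq_square)
      finally have gd2: "g ^ (d + 2) = q ^ (k + 1)" by simp
      have "q ^ (d - 1) * g ^ (d + 2) = q ^ (3 * d div 2)"
      proof -
        have ex3: "d - 1 + (k + 1) = 3 * d div 2" using k k1 by simp
        show ?thesis unfolding gd2 by (simp only: power_add[symmetric] ex3)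
      qed
      hence "q ^ (d - 1) * g ^ (d + 2) * W = complex_of_real (real CARD('a) ^ (3 * d div 2) * (OmegaP A - OmegaM A))"
        unfolding W_def q_def by simp
      hence "complex_of_real (real (SQ A) + real (ZR A) / 2)
          = complex_of_real (real (card A)^2 / 2 + real CARD('a) ^ (3 * d div 2) * (OmegaP A - OmegaM A) / 2)"
        unfolding C key[symmetric] by simp
      hence "real (SQ A) + real (ZR A) / 2 = real (card A)^2 / 2 + real CARD('a) ^ (3 * d div 2) * (OmegaP A - OmegaM A) / 2"
        by (simp only: of_real_eq_iff)
      also have "real (card A)^2 / 2 + real CARD('a) ^ (3 * d div 2) * (OmegaP A - OmegaM A) / 2
          = real (card A)^2 / 2 + real CARD('a) ^ (3 * d div 2) / 2 * OmegaP A
            - real CARD('a) ^ (3 * d div 2) / 2 * OmegaM A" by (rule alg1)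
      finally show "real (SQ A) + real (ZR A) / 2 =
           real (card A) ^ 2 / 2
           + real CARD('a) ^ (3 * CARD('n) div 2) / 2 * OmegaP A
           - real CARD('a) ^ (3 * CARD('n) div 2) / 2 * OmegaM A"
        unfolding d_def .
    qed
  qed
qed


end
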